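(* Let $P$ be a non-constant polynomial with integer coefficients and positive leading coefficient. Then there exists a natural number $n$ such that $P(n)$ is not a practical number.
   Context: A positive integer $N$ is called a practical number if every integer in $[1,N]$ can be expressed as a sum of distinct positive divisors of $N$. *)

theory Defs
  imports "HOL-Computational_Algebra.Polynomial"
begin

definition practical :: "int \<Rightarrow> bool" where
  "practical N \<longleftrightarrow> N > 0 \<and>
     (\<forall>m\<in>{1..N}. \<exists>S. S \<subseteq> {d. d > 0 \<and> d dvd N} \<and> \<Sum>S = m)"

end

theory Submission
  imports Defs
begin

lemma poly_diff_dvd:
  fixes P :: "int poly"
  shows "(x - y) dvd (poly P x - poly P y)"
proof (induction P rule: pCons_induct)
  case 0
  then show ?case by simp
next
  case (pCons a p)
  have "poly (pCons a p) x - poly (pCons a p) y = x * (poly p x - poly p y) + (x - y) * poly p y"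
    by (simp add: algebra_simps)
  then show ?case using pCons.IH by simp
qed

lemma poly_grow:
  fixes P :: "int poly"
  assumes "degree P \<ge> 1" "lead_coeff P > 0"
  shows "\<exists>N. \<forall>n\<ge>N. poly P n > B"
  using assms
proof (induction P arbitrary: B rule: pCons_induct)
  case 0
  then show ?case by simp
next
  case (pCons a q)
  have q0: "q \<noteq> 0" using pCons.prems by auto
  have lq: "lead_coeff q > 0" using pCons.prems q0 by (simp add: lead_coeff_pCons)
  show ?case
  proof (cases "degree q = 0")
    case True
    then obtain c where qc: "q = [:c:]" by (metis degree_eq_zeroE)
    have c: "c > 0" using lq qc by simp
    show ?thesis
    proof (intro exI allI impI)
      fix n assume n: "n \<ge> max 1 (\<bar>B\<bar> + \<bar>a\<bar> + 1)"
      have "n * c \<ge> n" using c n by (smt (verit) mult_le_cancel_left1)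
      then show "poly (pCons a q) n > B" using n qc by simp
    qed
  next
    case False
    obtain N where N: "\<forall>n\<ge>N. poly q n > \<bar>a\<bar> + \<bar>B\<bar>"
      using pCons.IH[of "\<bar>a\<bar> + \<bar>B\<bar>"] False lq by auto
    show ?thesis
    proof (intro exI allI impI)
      fix n assume n: "n \<ge> max N 1"
      have h: "poly q n > \<bar>a\<bar> + \<bar>B\<bar>" using N n by auto
      have "n * poly q n \<ge> poly q n" using n h
        by (smt (verit) mult_le_cancel_right1)
      then show "poly (pCons a q) n > B" using h by simp
    qed
  qed
qed

theorem proposition2p1:
  fixes P :: "int poly"
  assumes "degree P \<ge> 1" and "lead_coeff P > 0"
  shows "\<exists>n::nat. \<not> practical (poly P (int n))"
proof -
  obtain N0 where N0: "\<forall>n\<ge>N0. poly P n > 0" using poly_grow[OF assms, of 0] by blast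
  define k where "k = max N0 0"
  define A where "A = poly P k"
  have A: "A > 0" using N0 unfolding A_def k_def by auto
  have k0: "k \<ge> 0" unfolding k_def by simp
  define x where "x = A * A + 1"
  define L :: int where "L = fact (nat x)"
  have L: "L \<ge> 1" unfolding L_def by simp
  define M where "M = A * L"
  have M: "M \<ge> 1" using A L unfolding M_def by (smt (verit) mult_le_cancel_left1)
  obtain N2 where N2: "\<forall>n\<ge>N2. poly P n > x" using poly_grow[OF assms, of x] by blast
  define t where "t = \<bar>N2\<bar> + 1"
  define n where "n = k + M * t"
  have Mt: "M * t \<ge> t" using M unfolding t_def by (smt (verit) mult_le_cancel_right1)
  have n0: "n \<ge> 0" and nN2: "n \<ge> N2" proof -
    have "t \<ge> 1" "t \<ge> N2" unfolding t_def by auto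
    then show "n \<ge> 0" "n \<ge> N2" using k0 Mt unfolding n_def by linarith+
  qed
  define Nv where "Nv = poly P n"
  have Nx: "Nv > x" using N2 nN2 unfolding Nv_def by auto
  have "(n - k) dvd (Nv - A)" unfolding Nv_def A_def by (rule poly_diff_dvd)
  moreover have "n - k = M * t" unfolding n_def by simp
  ultimately have "M dvd (Nv - A)" by (metis dvd_mult_left)
  then obtain s where s: "Nv - A = M * s" by blast
  have notp: "\<not> practical Nv"
  proof
    assume "practical Nv"
    hence allm: "\<forall>m\<in>{1..Nv}. \<exists>S. S \<subseteq> {d. d > 0 \<and> d dvd Nv} \<and> \<Sum>S = m"
      unfolding practical_def by blast
    have "x \<in> {1..Nv}" using Nx unfolding x_def by auto
    then obtain S where S: "S \<subseteq> {d. d > 0 \<and> d dvd Nv}" "\<Sum>S = x"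
      using allm by blast
    have x0: "x > 0" unfolding x_def by simp
    have fin: "finite S" using S(2) x0 by (metis less_irrefl sum.infinite)
    have sub: "S \<subseteq> {1..A}"
    proof
      fix d assume d: "d \<in> S"
      have dpos: "d > 0" and ddvd: "d dvd Nv" using S(1) d by auto
      have "d \<le> \<Sum>S" using fin d S(1) by (intro member_le_sum) auto
      hence dx: "d \<le> x" using S(2) by simp
      have "nat d dvd fact (nat x)" using dpos dx by (intro dvd_fact) auto
      hence "int (nat d) dvd int (fact (nat x))" by (simp only: int_dvd_int_iff)
      hence dL: "d dvd L" using dpos unfolding L_def by (simp add: of_nat_fact)
      have "d dvd M * s" unfolding M_def using dL by simp
      hence "d dvd Nv - M * s" using ddvd by (simp add: dvd_diff)
      moreover have "Nv - M * s = A" using s by simp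
      ultimately have "d dvd A" by simp
      hence "d \<le> A" using A by (simp add: zdvd_imp_le)
      then show "d \<in> {1..A}" using dpos by simp
    qed
    have "\<Sum>S \<le> \<Sum>{1..A}" using sub by (intro sum_mono2) auto
    also have "\<dots> \<le> of_nat (card {1..A}) * A" by (intro sum_bounded_above) auto
    also have "\<dots> = A * A" using A by simp
    finally show False using S(2) unfolding x_def by simp
  qed
  show ?thesis
    by (rule exI[of _ "nat n"]) (use notp n0 in \<open>simp add: Nv_def\<close>)
qed

end
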